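(* Let $n\geq 2$ and $\mathbf{q},\mathbf{p}\in(\Bbbk^\times)^n$. Then $B_n(\mathbf{q})\cong B_n(\mathbf{p})$ if and only if there exist $\alpha_0,\dots,\alpha_{n-1}\in\Bbbk^\times$ and $0\le k<n$ such that $p_i=\frac{\alpha_{i+k+1}}{\alpha_{i+k}}q_{i+k}$ for all $0\le i<n$ (indices modulo $n$).
   Context: $\Bbbk$ is an algebraically closed field of characteristic zero. Paths are written left to right ($xy$ means $x$ then $y$). For $n\ge2$ and $\mathbf{q}=(q_0,\dots,q_{n-1})\in(\Bbbk^\times)^n$, $B_n(\mathbf{q})=\Bbbk Q/(b_ia_i-q_ia_ib_{i+1},\ i=0,\dots,n-1)$, where $Q$ has vertices $e_0,\dots,e_{n-1}$, arrows $a_i:e_i\to e_{i+1}$ and a loop $b_i$ at $e_i$ for each $i$, indices modulo $n$. *)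

theory Defs
  imports "HOL-Computational_Algebra.Polynomial"
begin

text \<open>The quiver Q: vertices 0..n-1, arrows a_i : i -> i+1 (mod n), loops b_i at i.
  Paths are written left to right; a path is (start vertex, list of arrows).\<close>

datatype arr = Arr_a nat | Arr_b nat

fun arr_src :: "arr \<Rightarrow> nat" where
  "arr_src (Arr_a i) = i"
| "arr_src (Arr_b i) = i"

fun arr_tgt :: "nat \<Rightarrow> arr \<Rightarrow> nat" where
  "arr_tgt n (Arr_a i) = Suc i mod n"
| "arr_tgt n (Arr_b i) = i"

type_synonym qpath = "nat \<times> arr list"

fun path_tgt :: "nat \<Rightarrow> nat \<Rightarrow> arr list \<Rightarrow> nat" where
  "path_tgt n v [] = v"
| "path_tgt n v (x # ws) = path_tgt n (arr_tgt n x) ws"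

fun path_ok :: "nat \<Rightarrow> nat \<Rightarrow> arr list \<Rightarrow> bool" where
  "path_ok n v [] = True"
| "path_ok n v (x # ws) = (arr_src x = v \<and> path_ok n (arr_tgt n x) ws)"

definition valid_path :: "nat \<Rightarrow> qpath \<Rightarrow> bool" where
  "valid_path n p = (fst p < n \<and> path_ok n (fst p) (snd p))"

text \<open>Elements of the path algebra kQ: finitely supported functions on valid paths.\<close>

definition pelt :: "nat \<Rightarrow> (qpath \<Rightarrow> 'k::field) \<Rightarrow> bool" where
  "pelt n f = (finite {p. f p \<noteq> 0} \<and> (\<forall>p. f p \<noteq> 0 \<longrightarrow> valid_path n p))"

definition padd :: "(qpath \<Rightarrow> 'k::field) \<Rightarrow> (qpath \<Rightarrow> 'k) \<Rightarrow> qpath \<Rightarrow> 'k" where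
  "padd f g = (\<lambda>p. f p + g p)"

definition psub :: "(qpath \<Rightarrow> 'k::field) \<Rightarrow> (qpath \<Rightarrow> 'k) \<Rightarrow> qpath \<Rightarrow> 'k" where
  "psub f g = (\<lambda>p. f p - g p)"

definition psmult :: "'k::field \<Rightarrow> (qpath \<Rightarrow> 'k) \<Rightarrow> qpath \<Rightarrow> 'k" where
  "psmult c f = (\<lambda>p. c * f p)"

text \<open>Multiplication = concatenation of paths (zero if not composable), extended bilinearly.\<close>
definition pmult :: "nat \<Rightarrow> (qpath \<Rightarrow> 'k::field) \<Rightarrow> (qpath \<Rightarrow> 'k) \<Rightarrow> qpath \<Rightarrow> 'k" where
  "pmult n f g = (\<lambda>(v, ws). \<Sum>j\<le>length ws.
      f (v, take j ws) * g (path_tgt n v (take j ws), drop j ws))"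

definition punit :: "nat \<Rightarrow> qpath \<Rightarrow> 'k::field" where
  "punit n = (\<lambda>(v, ws). if ws = [] \<and> v < n then 1 else 0)"

definition pbasis :: "qpath \<Rightarrow> qpath \<Rightarrow> 'k::field" where
  "pbasis p = (\<lambda>p'. if p' = p then 1 else 0)"

definition brel :: "nat \<Rightarrow> (nat \<Rightarrow> 'k::field) \<Rightarrow> nat \<Rightarrow> qpath \<Rightarrow> 'k" where
  "brel n q i = psub (pbasis (i, [Arr_b i, Arr_a i]))
                     (psmult (q i) (pbasis (i, [Arr_a i, Arr_b (Suc i mod n)])))"

inductive_set rel_ideal :: "nat \<Rightarrow> (nat \<Rightarrow> 'k::field) \<Rightarrow> (qpath \<Rightarrow> 'k) set"
  for n :: nat and q :: "nat \<Rightarrow> 'k" where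
  zero: "(\<lambda>_. 0) \<in> rel_ideal n q"
| gen: "\<lbrakk>pelt n x; pelt n y; i < n\<rbrakk> \<Longrightarrow> pmult n (pmult n x (brel n q i)) y \<in> rel_ideal n q"
| add: "\<lbrakk>f \<in> rel_ideal n q; g \<in> rel_ideal n q\<rbrakk> \<Longrightarrow> padd f g \<in> rel_ideal n q"

text \<open>B_n(q) = kQ / I_q is isomorphic (as k-algebra) to B_n(p) = kQ / I_p:
  there is a map phi : kQ -> kQ inducing a surjective k-algebra homomorphism
  kQ -> kQ / I_p whose kernel is exactly I_q.\<close>
definition B_iso :: "nat \<Rightarrow> (nat \<Rightarrow> 'k::field) \<Rightarrow> (nat \<Rightarrow> 'k) \<Rightarrow> bool" where
  "B_iso n q p = (\<exists>\<phi> :: (qpath \<Rightarrow> 'k) \<Rightarrow> (qpath \<Rightarrow> 'k).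
      (\<forall>x. pelt n x \<longrightarrow> pelt n (\<phi> x))
    \<and> (\<forall>x y. pelt n x \<longrightarrow> pelt n y \<longrightarrow>
          psub (\<phi> (padd x y)) (padd (\<phi> x) (\<phi> y)) \<in> rel_ideal n p)
    \<and> (\<forall>c x. pelt n x \<longrightarrow> psub (\<phi> (psmult c x)) (psmult c (\<phi> x)) \<in> rel_ideal n p)
    \<and> (\<forall>x y. pelt n x \<longrightarrow> pelt n y \<longrightarrow>
          psub (\<phi> (pmult n x y)) (pmult n (\<phi> x) (\<phi> y)) \<in> rel_ideal n p)
    \<and> psub (\<phi> (punit n)) (punit n) \<in> rel_ideal n p
    \<and> (\<forall>x. pelt n x \<longrightarrow> (\<phi> x \<in> rel_ideal n p \<longleftrightarrow> x \<in> rel_ideal n q))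
    \<and> (\<forall>y. pelt n y \<longrightarrow> (\<exists>x. pelt n x \<and> psub (\<phi> x) y \<in> rel_ideal n p)))"

end

theory Submission
  imports Defs "HOL-Library.Function_Algebras"
begin

lemma path_tgt_append[simp]: "path_tgt n v (u @ u') = path_tgt n (path_tgt n v u) u'"
  by (induction u arbitrary: v) auto

lemma path_ok_append[simp]: "path_ok n v (u @ u') = (path_ok n v u \<and> path_ok n (path_tgt n v u) u')"
  by (induction u arbitrary: v) auto

lemma path_tgt_lt: "0 < n \<Longrightarrow> v < n \<Longrightarrow> path_ok n v ws \<Longrightarrow> path_tgt n v ws < n"
proof (induction ws arbitrary: v)
  case Nil then show ?case by simp
next
  case (Cons x ws)
  then show ?case by (cases x) auto
qed

lemma pbasis_apply: "pbasis P P' = (if P' = P then 1 else 0)"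
  by (simp add: pbasis_def)

lemma pmult_pbasis_apply:
  "pmult n (pbasis (v,u)) (pbasis (w,u')) (x, ws) =
     (if path_tgt n v u = w \<and> x = v \<and> ws = u @ u' then 1 else 0)"
proof -
  define c where "c = (if x = v \<and> take (length u) ws = u \<and> path_tgt n v u = w \<and> drop (length u) ws = u' then (1::'a) else 0)"
  have eq: "pbasis (v, u) (x, take j ws) * pbasis (w, u') (path_tgt n x (take j ws), drop j ws)
     = (if j = length u then c else 0)" if j: "j \<le> length ws" for j
  proof (cases "take j ws = u")
    case True
    then have "length u = j" using j by auto
    then show ?thesis using True by (auto simp: pbasis_def c_def)
  next
    case False
    then show ?thesis by (auto simp: pbasis_def c_def)
  qed
  have "pmult n (pbasis (v,u)) (pbasis (w,u')) (x, ws) = (\<Sum>j\<le>length ws. (if j = length u then c else 0))"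
    unfolding pmult_def prod.case by (rule sum.cong) (auto simp: eq)
  also have "\<dots> = (if length u \<le> length ws then c else 0)"
    by (subst sum.delta) auto
  also have "\<dots> = (if path_tgt n v u = w \<and> x = v \<and> ws = u @ u' then 1 else 0)"
  proof -
    have "(ws = u @ u') = (take (length u) ws = u \<and> drop (length u) ws = u')"
      by (metis append_eq_conv_conj)
    moreover have "take (length u) ws = u \<Longrightarrow> length u \<le> length ws"
      by (metis length_take min.bounded_iff nat_le_linear)
    ultimately show ?thesis unfolding c_def by auto
  qed
  finally show ?thesis .
qed

lemma pmult_pbasis:
  "pmult n (pbasis (v,u)) (pbasis (w,u')) =
     (if path_tgt n v u = w then pbasis (v, u @ u') else (\<lambda>_. 0))"
proof (rule ext)
  fix P show "pmult n (pbasis (v,u)) (pbasis (w,u')) P =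
     (if path_tgt n v u = w then pbasis (v, u @ u') else (\<lambda>_. 0)) P"
    by (cases P) (simp add: pmult_pbasis_apply pbasis_apply)
qed


lemma fsum_apply: "(\<Sum>i\<in>I. F i) p = (\<Sum>i\<in>I. F i p)"
  by (induction I rule: infinite_finite_induct) auto

lemma padd_eq: "padd f g = f + g" by (simp add: padd_def plus_fun_def)

lemma pmult_padd_left: "pmult n (padd f g) h = padd (pmult n f h) (pmult n g h)"
  by (rule ext) (auto simp: pmult_def padd_def sum.distrib ring_distribs)

lemma pmult_padd_right: "pmult n h (padd f g) = padd (pmult n h f) (pmult n h g)"
  by (rule ext) (auto simp: pmult_def padd_def sum.distrib ring_distribs)

lemma pmult_psmult_left: "pmult n (psmult c f) g = psmult c (pmult n f g)"
  by (rule ext) (auto simp: pmult_def psmult_def sum_distrib_left mult.assoc)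

lemma pmult_psmult_right: "pmult n f (psmult c g) = psmult c (pmult n f g)"
  by (rule ext) (auto simp: pmult_def psmult_def sum_distrib_left mult.assoc mult.left_commute)

lemma pmult_zero_left: "pmult n (\<lambda>_. 0) g = (\<lambda>_. 0)"
  by (rule ext) (auto simp: pmult_def)

lemma pmult_zero_right: "pmult n f (\<lambda>_. 0) = (\<lambda>_. 0)"
  by (rule ext) (auto simp: pmult_def)

lemma pmult_sum_left: "pmult n (\<Sum>i\<in>I. G i) g = (\<Sum>i\<in>I. pmult n (G i) g)"
proof (induction I rule: infinite_finite_induct)
  case (infinite A) then show ?case by (simp add: zero_fun_def pmult_zero_left)
next
  case empty then show ?case by (simp add: zero_fun_def pmult_zero_left)
next
  case (insert x F)
  have "pmult n (G x + sum G F) g = pmult n (G x) g + pmult n (sum G F) g"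
    using pmult_padd_left[of n "G x" "sum G F" g] by (simp only: padd_eq)
  then show ?case unfolding sum.insert[OF insert.hyps] by (simp only: insert.IH)
qed

lemma pmult_sum_right: "pmult n g (\<Sum>i\<in>I. G i) = (\<Sum>i\<in>I. pmult n g (G i))"
proof (induction I rule: infinite_finite_induct)
  case (infinite A) then show ?case by (simp add: zero_fun_def pmult_zero_right)
next
  case empty then show ?case by (simp add: zero_fun_def pmult_zero_right)
next
  case (insert x F)
  have "pmult n g (G x + sum G F) = pmult n g (G x) + pmult n g (sum G F)"
    using pmult_padd_right[of n g "G x" "sum G F"] by (simp only: padd_eq)
  then show ?case unfolding sum.insert[OF insert.hyps] by (simp only: insert.IH)
qed

lemma pelt_zero[simp]: "pelt n (\<lambda>_. 0)"
  by (simp add: pelt_def)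

lemma pelt_zero'[simp]: "pelt n 0"
  by (simp add: pelt_def)

lemma pelt_padd[simp]: "pelt n f \<Longrightarrow> pelt n g \<Longrightarrow> pelt n (padd f g)"
  unfolding pelt_def padd_def
  apply (intro conjI)
   apply (auto intro: finite_subset[of _ "{p. f p \<noteq> 0} \<union> {p. g p \<noteq> 0}"])[1]
  by (metis add.right_neutral)

lemma pelt_plus[simp]: "pelt n f \<Longrightarrow> pelt n g \<Longrightarrow> pelt n (f + g)"
  using pelt_padd[of n f g] by (simp add: padd_eq)

lemma pelt_psmult[simp]: "pelt n f \<Longrightarrow> pelt n (psmult c f)"
  unfolding pelt_def psmult_def
  by (auto intro: finite_subset[of _ "{p. f p \<noteq> 0}"])

lemma pelt_psub[simp]: "pelt n f \<Longrightarrow> pelt n g \<Longrightarrow> pelt n (psub f g)"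
  unfolding pelt_def psub_def
  apply (intro conjI)
   apply (auto intro: finite_subset[of _ "{p. f p \<noteq> 0} \<union> {p. g p \<noteq> 0}"])[1]
  by (metis diff_self)

lemma pelt_sum: "(\<And>i. i \<in> I \<Longrightarrow> pelt n (F i)) \<Longrightarrow> pelt n (\<Sum>i\<in>I. F i)"
  by (induction I rule: infinite_finite_induct) auto

lemma pelt_pbasis[simp]: "valid_path n P \<Longrightarrow> pelt n (pbasis P)"
  by (auto simp: pelt_def pbasis_def)

lemma pmult_nonzero:
  assumes "pmult n f g (v, ws) \<noteq> 0"
  shows "\<exists>j\<le>length ws. f (v, take j ws) \<noteq> 0 \<and> g (path_tgt n v (take j ws), drop j ws) \<noteq> 0"
proof -
  from assms obtain j where "j \<in> {..length ws}"
    "f (v, take j ws) * g (path_tgt n v (take j ws), drop j ws) \<noteq> 0"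
    unfolding pmult_def by (auto elim!: sum.not_neutral_contains_not_neutral)
  then show ?thesis by auto
qed

lemma pelt_pmult[simp]:
  assumes f: "pelt n f" and g: "pelt n g"
  shows "pelt n (pmult n f g)"
proof -
  let ?S = "(\<lambda>(P, P'). (fst P, snd P @ snd P')) ` ({p. f p \<noteq> 0} \<times> {p. g p \<noteq> 0})"
  have sub: "{p. pmult n f g p \<noteq> 0} \<subseteq> ?S"
  proof
    fix p assume "p \<in> {p. pmult n f g p \<noteq> 0}"
    then obtain v ws where p: "p = (v, ws)" and nz: "pmult n f g (v, ws) \<noteq> 0" by (cases p) auto
    from pmult_nonzero[OF nz] obtain j where "f (v, take j ws) \<noteq> 0" "g (path_tgt n v (take j ws), drop j ws) \<noteq> 0"
      by auto
    then have "((v, take j ws), (path_tgt n v (take j ws), drop j ws)) \<in> {p. f p \<noteq> 0} \<times> {p. g p \<noteq> 0}" by auto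
    then show "p \<in> ?S" unfolding p by (force intro!: image_eqI)
  qed
  have fin: "finite ?S" using f g by (auto simp: pelt_def)
  have val: "valid_path n p" if "pmult n f g p \<noteq> 0" for p
  proof -
    obtain v ws where p: "p = (v, ws)" by (cases p)
    from pmult_nonzero[of n f g v ws] that obtain j where "f (v, take j ws) \<noteq> 0" "g (path_tgt n v (take j ws), drop j ws) \<noteq> 0"
      unfolding p by auto
    then have "valid_path n (v, take j ws)" "valid_path n (path_tgt n v (take j ws), drop j ws)"
      using f g by (auto simp: pelt_def)
    then have "v < n" "path_ok n v (take j ws @ drop j ws)"
      by (auto simp: valid_path_def simp del: append_take_drop_id)
    then show ?thesis by (simp add: p valid_path_def)
  qed
  show ?thesis unfolding pelt_def using finite_subset[OF sub fin] val by auto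
qed


lemma pelt_punit2[simp]: "pelt n (punit n)"
proof -
  have "{p. punit n p \<noteq> (0::'a)} = (\<lambda>v. (v, [])) ` {..<n}"
    by (auto simp: punit_def split: if_splits)
  then show ?thesis by (auto simp: pelt_def punit_def valid_path_def split: if_splits)
qed

lemma pmult_punit_left:
  assumes "pelt n f" shows "pmult n (punit n) f = f"
proof (rule ext, clarify)
  fix v ws
  have "pmult n (punit n) f (v, ws) = (\<Sum>j\<le>length ws. if j = 0 then (if v < n then f (v, ws) else 0) else 0)"
    unfolding pmult_def prod.case
    by (rule sum.cong) (auto simp: punit_def)
  also have "\<dots> = (if v < n then f (v, ws) else 0)" by (subst sum.delta) auto
  also have "\<dots> = f (v, ws)" using assms by (auto simp: pelt_def valid_path_def)
  finally show "pmult n (punit n) f (v, ws) = f (v, ws)" .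
qed

lemma pmult_punit_right:
  assumes "pelt n f" "0 < n" shows "pmult n f (punit n) = f"
proof (rule ext, clarify)
  fix v ws
  have "pmult n f (punit n) (v, ws) = (\<Sum>j\<le>length ws. if j = length ws then (if path_tgt n v ws < n then f (v, ws) else 0) else 0)"
    unfolding pmult_def prod.case
    by (rule sum.cong) (auto simp: punit_def)
  also have "\<dots> = (if path_tgt n v ws < n then f (v, ws) else 0)" by (subst sum.delta) auto
  also have "\<dots> = f (v, ws)" using assms path_tgt_lt[of n v ws] by (auto simp: pelt_def valid_path_def)
  finally show "pmult n f (punit n) (v, ws) = f (v, ws)" .
qed

lemma punit_sum: "punit n = (\<Sum>v<n. pbasis (v, []))"
  by (rule ext) (auto simp: fsum_apply punit_def pbasis_def sum.delta)

lemma decomp: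
  assumes "pelt n x"
  shows "x = (\<Sum>P\<in>{P. x P \<noteq> 0}. psmult (x P) (pbasis P))"
proof (rule ext)
  fix p
  have "(\<Sum>P\<in>{P. x P \<noteq> 0}. psmult (x P) (pbasis P)) p = (\<Sum>P\<in>{P. x P \<noteq> 0}. if p = P then x p else 0)"
    unfolding fsum_apply by (rule sum.cong) (auto simp: psmult_def pbasis_def)
  also have "\<dots> = x p" using assms by (simp add: pelt_def)
  finally show "x p = (\<Sum>P\<in>{P. x P \<noteq> 0}. psmult (x P) (pbasis P)) p" ..
qed


lemma kq_induct[consumes 1, case_names zero add smult mult ev ea eb]:
  assumes x: "pelt n x"
    and zero: "Pr (\<lambda>_. 0)"
    and add: "\<And>f g. pelt n f \<Longrightarrow> pelt n g \<Longrightarrow> Pr f \<Longrightarrow> Pr g \<Longrightarrow> Pr (padd f g)"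
    and smult: "\<And>c f. pelt n f \<Longrightarrow> Pr f \<Longrightarrow> Pr (psmult c f)"
    and mult: "\<And>f g. pelt n f \<Longrightarrow> pelt n g \<Longrightarrow> Pr f \<Longrightarrow> Pr g \<Longrightarrow> Pr (pmult n f g)"
    and ev: "\<And>v. v < n \<Longrightarrow> Pr (pbasis (v, []))"
    and ea: "\<And>i. i < n \<Longrightarrow> Pr (pbasis (i, [Arr_a i]))"
    and eb: "\<And>i. i < n \<Longrightarrow> Pr (pbasis (i, [Arr_b i]))"
  shows "Pr x"
proof -
  have basis: "valid_path n (v, ws) \<Longrightarrow> Pr (pbasis (v, ws))" for v ws
  proof (induction ws arbitrary: v)
    case Nil then show ?case using ev by (simp add: valid_path_def)
  next
    case (Cons a ws)
    then have v: "v < n" and src: "arr_src a = v" and ok: "path_ok n (arr_tgt n a) ws"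
      by (auto simp: valid_path_def)
    have tgt: "arr_tgt n a < n" using v src by (cases a) auto
    have va: "valid_path n (v, [a])" using v src by (simp add: valid_path_def)
    have vw: "valid_path n (arr_tgt n a, ws)" using tgt ok by (simp add: valid_path_def)
    have eq: "pbasis (v, a # ws) = pmult n (pbasis (v, [a])) (pbasis (arr_tgt n a, ws))"
      by (simp add: pmult_pbasis)
    have pa: "Pr (pbasis (v, [a]))"
    proof (cases a)
      case (Arr_a i) then show ?thesis using src v ea by simp
    next
      case (Arr_b i) then show ?thesis using src v eb by simp
    qed
    show ?case unfolding eq
      by (rule mult) (use va vw pa Cons.IH in auto)
  qed
  have fin: "finite {P. x P \<noteq> 0}" and val: "\<And>P. P \<in> {P. x P \<noteq> 0} \<Longrightarrow> valid_path n P"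
    using x by (auto simp: pelt_def)
  have "\<forall>P\<in>S. valid_path n P \<Longrightarrow> Pr (\<Sum>P\<in>S. psmult (x P) (pbasis P)) \<and> pelt n (\<Sum>P\<in>S. psmult (x P) (pbasis P))"
    if "finite S" for S
    using that
  proof (induction S rule: finite_induct)
    case empty then show ?case using zero by (simp add: zero_fun_def)
  next
    case (insert P F)
    have vP: "valid_path n P" using insert by auto
    have "Pr (padd (psmult (x P) (pbasis P)) (\<Sum>P\<in>F. psmult (x P) (pbasis P)))"
      by (rule add) (use insert vP basis[of "fst P" "snd P"] smult in auto)
    moreover have "pelt n (padd (psmult (x P) (pbasis P)) (\<Sum>P\<in>F. psmult (x P) (pbasis P)))"
      using insert vP by auto
    ultimately show ?case unfolding sum.insert[OF insert.hyps] padd_eq by blast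
  qed
  with fin val have "Pr (\<Sum>P\<in>{P. x P \<noteq> 0}. psmult (x P) (pbasis P))" by blast
  then show ?thesis using decomp[OF x] by simp
qed


lemma pelt_brel[simp]: "i < n \<Longrightarrow> pelt n (brel n q i)"
  unfolding brel_def
  by (intro pelt_psub pelt_psmult pelt_pbasis) (auto simp: valid_path_def)

lemma ideal_pelt: "f \<in> rel_ideal n q \<Longrightarrow> pelt n f"
  by (induction rule: rel_ideal.induct) auto

lemma brel_in: "0 < n \<Longrightarrow> i < n \<Longrightarrow> brel n q i \<in> rel_ideal n q"
  using rel_ideal.gen[of n "punit n" "punit n" i q]
  by (simp add: pmult_punit_left pmult_punit_right)


datatype 'a tri = Tri (tu: 'a) (tm: 'a) (tw: 'a)

instantiation tri :: (comm_ring_1) ring_1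
begin
definition zero_tri_def: "0 = Tri 0 0 0"
definition one_tri_def: "1 = Tri 1 0 1"
definition plus_tri_def: "x + y = Tri (tu x + tu y) (tm x + tm y) (tw x + tw y)"
definition uminus_tri_def: "- x = Tri (- tu x) (- tm x) (- tw x)"
definition minus_tri_def: "x - y = Tri (tu x - tu y) (tm x - tm y) (tw x - tw y)"
definition times_tri_def: "x * y = Tri (tu x * tu y) (tu x * tm y + tm x * tw y) (tw x * tw y)"
instance
  by standard (auto simp: tri.expand zero_tri_def one_tri_def plus_tri_def uminus_tri_def
      minus_tri_def times_tri_def algebra_simps)
end

lemma tri_sel_simps[simp]:
  "tu (0::'a::comm_ring_1 tri) = 0" "tm (0::'a::comm_ring_1 tri) = 0" "tw (0::'a::comm_ring_1 tri) = 0"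
  "tu (1::'a::comm_ring_1 tri) = 1" "tm (1::'a::comm_ring_1 tri) = 0" "tw (1::'a::comm_ring_1 tri) = 1"
  "tu (x + y) = tu x + tu y" "tm (x + y) = tm x + tm y" "tw (x + y) = tw x + tw y"
  "tu (x - y) = tu x - tu y" "tm (x - y) = tm x - tm y" "tw (x - y) = tw x - tw y"
  "tu (- x) = - tu x" "tm (- x) = - tm x" "tw (- x) = - tw x"
  "tu (x * y) = tu x * tu y" "tm (x * y) = tu x * tm y + tm x * tw y" "tw (x * y) = tw x * tw y"
  by (auto simp: zero_tri_def one_tri_def plus_tri_def uminus_tri_def minus_tri_def times_tri_def)

lemma tri_eq_iff: "(x::'a tri) = y \<longleftrightarrow> tu x = tu y \<and> tm x = tm y \<and> tw x = tw y"
  by (cases x; cases y) auto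

lemma tu_sum[simp]: "tu (\<Sum>i\<in>I. F i :: 'a::comm_ring_1 tri) = (\<Sum>i\<in>I. tu (F i))"
  by (induction I rule: infinite_finite_induct) auto
lemma tm_sum[simp]: "tm (\<Sum>i\<in>I. F i :: 'a::comm_ring_1 tri) = (\<Sum>i\<in>I. tm (F i))"
  by (induction I rule: infinite_finite_induct) auto
lemma tw_sum[simp]: "tw (\<Sum>i\<in>I. F i :: 'a::comm_ring_1 tri) = (\<Sum>i\<in>I. tw (F i))"
  by (induction I rule: infinite_finite_induct) auto

definition sc :: "'k::field \<Rightarrow> 'k poly tri" where
  "sc c = Tri [:c:] 0 [:c:]"

lemma sc_sel[simp]: "tu (sc c) = [:c:]" "tm (sc c) = 0" "tw (sc c) = [:c:]"
  by (auto simp: sc_def)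

lemma sc_mult_left: "sc c * z = Tri (smult c (tu z)) (smult c (tm z)) (smult c (tw z))"
  by (simp add: tri_eq_iff)
lemma sc_mult_right: "z * sc c = Tri (smult c (tu z)) (smult c (tm z)) (smult c (tw z))"
  by (simp add: tri_eq_iff)
lemma sc_central: "sc c * z = z * sc c"
  by (simp add: sc_mult_left sc_mult_right)
lemma sc_add: "sc (c + d) = sc c + sc d" by (simp add: tri_eq_iff)
lemma sc_mult: "sc (c * d) = sc c * sc d" by (simp add: tri_eq_iff)
lemma sc_0[simp]: "sc 0 = 0" by (simp add: tri_eq_iff)
lemma sc_1[simp]: "sc 1 = 1" by (simp add: tri_eq_iff)
lemma sc_diff: "sc (c - d) = sc c - sc d" by (simp add: tri_eq_iff)

definition pathval :: "(nat \<Rightarrow> 'k::field poly tri) \<Rightarrow> (arr \<Rightarrow> 'k poly tri) \<Rightarrow> qpath \<Rightarrow> 'k poly tri" where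
  "pathval E r P = E (fst P) * prod_list (map r (snd P))"

definition Hrep :: "(nat \<Rightarrow> 'k::field poly tri) \<Rightarrow> (arr \<Rightarrow> 'k poly tri) \<Rightarrow> (qpath \<Rightarrow> 'k) \<Rightarrow> 'k poly tri" where
  "Hrep E r f = (\<Sum>P\<in>{P. f P \<noteq> 0}. sc (f P) * pathval E r P)"

lemma Hrep_superset:
  assumes "finite S" "{P. f P \<noteq> 0} \<subseteq> S"
  shows "Hrep E r f = (\<Sum>P\<in>S. sc (f P) * pathval E r P)"
  unfolding Hrep_def by (rule sum.mono_neutral_left) (use assms in auto)

lemma Hrep_padd:
  assumes "pelt n f" "pelt n g"
  shows "Hrep E r (padd f g) = Hrep E r f + Hrep E r g"
proof -
  let ?S = "{P. f P \<noteq> 0} \<union> {P. g P \<noteq> 0}"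
  have fin: "finite ?S" using assms by (auto simp: pelt_def)
  have "Hrep E r (padd f g) = (\<Sum>P\<in>?S. sc (padd f g P) * pathval E r P)"
    by (rule Hrep_superset[OF fin]) (auto simp: padd_def)
  also have "\<dots> = (\<Sum>P\<in>?S. sc (f P) * pathval E r P) + (\<Sum>P\<in>?S. sc (g P) * pathval E r P)"
    by (simp add: padd_def sc_add ring_distribs sum.distrib)
  also have "\<dots> = Hrep E r f + Hrep E r g"
    using Hrep_superset[OF fin, of f] Hrep_superset[OF fin, of g] by auto
  finally show ?thesis .
qed

lemma Hrep_psmult:
  assumes "pelt n f"
  shows "Hrep E r (psmult c f) = sc c * Hrep E r f"
proof -
  let ?S = "{P. f P \<noteq> 0}"
  have fin: "finite ?S" using assms by (auto simp: pelt_def)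
  have "Hrep E r (psmult c f) = (\<Sum>P\<in>?S. sc (psmult c f P) * pathval E r P)"
    by (rule Hrep_superset[OF fin]) (auto simp: psmult_def)
  also have "\<dots> = sc c * Hrep E r f"
    by (simp add: Hrep_def psmult_def sc_mult sum_distrib_left mult.assoc)
  finally show ?thesis .
qed

lemma Hrep_zero[simp]: "Hrep E r (\<lambda>_. 0) = 0"
  by (simp add: Hrep_def)

lemma Hrep_psub:
  assumes "pelt n f" "pelt n g"
  shows "Hrep E r (psub f g) = Hrep E r f - Hrep E r g"
proof -
  have "psub f g = padd f (psmult (-1) g)" by (auto simp: psub_def padd_def psmult_def)
  then show ?thesis using assms
    by (simp add: Hrep_padd[of n] Hrep_psmult[of n] sc_def minus_tri_def plus_tri_def times_tri_def tri_eq_iff)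
qed

lemma Hrep_sum:
  assumes "\<And>i. i \<in> I \<Longrightarrow> pelt n (G i)"
  shows "Hrep E r (\<Sum>i\<in>I. G i) = (\<Sum>i\<in>I. Hrep E r (G i))"
  using assms
proof (induction I rule: infinite_finite_induct)
  case (infinite A) then show ?case by (simp add: zero_fun_def)
next
  case empty then show ?case by (simp add: zero_fun_def)
next
  case (insert x A)
  have p1: "pelt n (G x)" and p2: "pelt n (sum G A)" using insert.prems by (auto intro!: pelt_sum)
  have "Hrep E r (sum G (insert x A)) = Hrep E r (padd (G x) (sum G A))"
    unfolding sum.insert[OF insert.hyps] padd_eq ..
  also have "\<dots> = Hrep E r (G x) + Hrep E r (sum G A)" by (rule Hrep_padd[OF p1 p2])
  also have "Hrep E r (sum G A) = (\<Sum>i\<in>A. Hrep E r (G i))" using insert.IH insert.prems by blast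
  finally show ?case by (simp only: sum.insert[OF insert.hyps])
qed

lemma Hrep_pbasis[simp]: "Hrep E r (pbasis P) = pathval E r P"
proof -
  have "{P'. pbasis P P' \<noteq> (0::'a)} = {P}" by (auto simp: pbasis_def)
  then show ?thesis by (simp add: Hrep_def pbasis_def)
qed


lemma psmult_sum: "psmult c (\<Sum>i\<in>I. G i) = (\<Sum>i\<in>I. psmult c (G i))"
  by (rule ext) (simp add: psmult_def fsum_apply sum_distrib_left)

locale rep =
  fixes n :: nat and E :: "nat \<Rightarrow> 'k::field poly tri" and r :: "arr \<Rightarrow> 'k poly tri"
  assumes E_orth: "\<And>v w. v < n \<Longrightarrow> w < n \<Longrightarrow> E v * E w = (if v = w then E v else 0)"
    and r_a: "\<And>i. i < n \<Longrightarrow> r (Arr_a i) = E i * r (Arr_a i) * E (Suc i mod n)"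
    and r_b: "\<And>i. i < n \<Longrightarrow> r (Arr_b i) = E i * r (Arr_b i) * E i"
begin

lemma arr_ids:
  assumes "arr_src a < n"
  shows "E (arr_src a) * r a = r a" "r a * E (arr_tgt n a) = r a" "arr_tgt n a < n"
proof -
  have n: "0 < n" using assms by simp
  have eq: "r a = E (arr_src a) * r a * E (arr_tgt n a)"
    using assms r_a r_b by (cases a) auto
  have t: "arr_tgt n a < n" using assms n by (cases a) auto
  have "E (arr_src a) * r a = (E (arr_src a) * E (arr_src a)) * r a * E (arr_tgt n a)"
    by (subst eq) (simp add: mult.assoc)
  also have "\<dots> = r a" using E_orth[OF assms assms] eq[symmetric] by simp
  finally show "E (arr_src a) * r a = r a" .
  have "r a * E (arr_tgt n a) = E (arr_src a) * r a * (E (arr_tgt n a) * E (arr_tgt n a))"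
    by (subst eq) (simp add: mult.assoc)
  also have "\<dots> = r a" using E_orth[OF t t] eq[symmetric] by simp
  finally show "r a * E (arr_tgt n a) = r a" .
  show "arr_tgt n a < n" by (rule t)
qed

lemma pv_right:
  "v < n \<Longrightarrow> path_ok n v ws \<Longrightarrow>
     E v * prod_list (map r ws) * E (path_tgt n v ws) = E v * prod_list (map r ws)"
proof (induction ws arbitrary: v)
  case Nil then show ?case using E_orth[of v v] by simp
next
  case (Cons a ws)
  then have src: "arr_src a = v" and ok: "path_ok n (arr_tgt n a) ws" by auto
  note ids = arr_ids[of a, unfolded src, OF Cons.prems(1)]
  let ?t = "arr_tgt n a" and ?T = "path_tgt n (arr_tgt n a) ws" and ?P = "prod_list (map r ws)"
  have "E v * prod_list (map r (a # ws)) * E (path_tgt n v (a # ws)) = (E v * r a) * ?P * E ?T"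
    by (simp add: mult.assoc)
  also have "\<dots> = (r a * E ?t) * ?P * E ?T" using ids by simp
  also have "\<dots> = r a * (E ?t * ?P * E ?T)" by (simp add: mult.assoc)
  also have "\<dots> = r a * (E ?t * ?P)" using Cons.IH[OF ids(3) ok] by simp
  also have "\<dots> = (r a * E ?t) * ?P" by (simp add: mult.assoc)
  also have "\<dots> = r a * ?P" using ids by simp
  also have "\<dots> = (E v * r a) * ?P" using ids by simp
  also have "\<dots> = E v * prod_list (map r (a # ws))" by (simp add: mult.assoc)
  finally show ?case .
qed

lemma pathval_mult:
  assumes "valid_path n (v, u)" "valid_path n (w, u')"
  shows "pathval E r (v, u) * pathval E r (w, u') =
    (if path_tgt n v u = w then pathval E r (v, u @ u') else 0)"
proof -
  have v: "v < n" "path_ok n v u" and w: "w < n" using assms by (auto simp: valid_path_def)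
  have n: "0 < n" using v by simp
  have t: "path_tgt n v u < n" using path_tgt_lt[OF n v] .
  have "pathval E r (v, u) * pathval E r (w, u') =
      E v * prod_list (map r u) * E (path_tgt n v u) * E w * prod_list (map r u')"
    using pv_right[OF v] by (simp add: pathval_def mult.assoc)
  also have "\<dots> = (if path_tgt n v u = w then pathval E r (v, u @ u') else 0)"
  proof (cases "path_tgt n v u = w")
    case True
    then show ?thesis using pv_right[OF v] E_orth[OF w w]
      by (simp add: pathval_def mult.assoc)
  next
    case False
    then have "E (path_tgt n v u) * E w = 0" using E_orth[OF t w] by simp
    then show ?thesis using False by (simp add: mult.assoc)
  qed
  finally show ?thesis .
qed

lemma Hrep_pmult_pbasis:
  assumes "valid_path n P" "valid_path n P'"
  shows "Hrep E r (pmult n (pbasis P) (pbasis P')) = pathval E r P * pathval E r P'"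
  using assms pathval_mult[of "fst P" "snd P" "fst P'" "snd P'"]
  by (cases P; cases P') (simp add: pmult_pbasis)

lemma Hrep_mult:
  assumes f: "pelt n f" and g: "pelt n g"
  shows "Hrep E r (pmult n f g) = Hrep E r f * Hrep E r g"
proof -
  let ?Sf = "{P. f P \<noteq> 0}" and ?Sg = "{P. g P \<noteq> 0}"
  have vf: "\<And>P. P \<in> ?Sf \<Longrightarrow> valid_path n P" using f by (auto simp: pelt_def)
  have vg: "\<And>P. P \<in> ?Sg \<Longrightarrow> valid_path n P" using g by (auto simp: pelt_def)
  have "pmult n f g = pmult n (\<Sum>P\<in>?Sf. psmult (f P) (pbasis P)) (\<Sum>P'\<in>?Sg. psmult (g P') (pbasis P'))"
    using decomp[OF f] decomp[OF g] by simp
  also have "\<dots> = (\<Sum>P\<in>?Sf. \<Sum>P'\<in>?Sg. psmult (f P) (psmult (g P') (pmult n (pbasis P) (pbasis P'))))"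
    apply (simp add: pmult_sum_left pmult_sum_right pmult_psmult_left pmult_psmult_right psmult_sum)
    apply (subst sum.swap)
    apply (rule sum.cong, simp, rule sum.cong, simp)
    apply (rule ext, simp add: psmult_def mult.left_commute)
    done
  finally have eq: "pmult n f g = \<dots>" .
  have "Hrep E r (pmult n f g) = (\<Sum>P\<in>?Sf. \<Sum>P'\<in>?Sg. Hrep E r (psmult (f P) (psmult (g P') (pmult n (pbasis P) (pbasis P')))))"
    unfolding eq
    by (subst Hrep_sum[of _ n], (auto intro!: pelt_sum simp: vf vg)[1],
        rule sum.cong, simp, subst Hrep_sum[of _ n], auto simp: vf vg)
  also have "\<dots> = (\<Sum>P\<in>?Sf. \<Sum>P'\<in>?Sg. (sc (f P) * pathval E r P) * (sc (g P') * pathval E r P'))"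
    apply (rule sum.cong, simp, rule sum.cong, simp)
    apply (subst Hrep_psmult[of n], simp add: vf vg)
    apply (subst Hrep_psmult[of n], simp add: vf vg)
    apply (subst Hrep_pmult_pbasis, simp add: vf, simp add: vg)
    apply (simp only: mult.assoc)
    apply (metis (no_types) mult.assoc sc_central)
    done
  also have "\<dots> = Hrep E r f * Hrep E r g"
    unfolding Hrep_def by (simp add: sum_product)
  finally show ?thesis .
qed


lemma Hrep_punit: "Hrep E r (punit n) = (\<Sum>v<n. E v)"
  unfolding punit_sum
  by (subst Hrep_sum[of _ n]) (auto simp: valid_path_def pathval_def)

lemma Hrep_ideal:
  assumes "\<And>i. i < n \<Longrightarrow> Hrep E r (brel n p i) = 0"
  shows "x \<in> rel_ideal n p \<Longrightarrow> Hrep E r x = 0"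
proof (induction rule: rel_ideal.induct)
  case zero then show ?case by simp
next
  case (gen x y i)
  then show ?case using assms[of i] by (simp add: Hrep_mult)
next
  case (add f g)
  then show ?case by (simp add: Hrep_padd[of n] ideal_pelt)
qed

end


fun bw :: "(nat \<Rightarrow> 'k::field) \<Rightarrow> arr \<Rightarrow> 'k" where
  "bw g (Arr_a i) = 1"
| "bw g (Arr_b i) = g i"

definition pscale :: "(nat \<Rightarrow> 'k::field) \<Rightarrow> (qpath \<Rightarrow> 'k) \<Rightarrow> qpath \<Rightarrow> 'k" where
  "pscale g f = (\<lambda>(v, ws). prod_list (map (bw g) ws) * f (v, ws))"

lemma pscale_apply: "pscale g f (v, ws) = prod_list (map (bw g) ws) * f (v, ws)"
  by (simp add: pscale_def)

lemma pscale_pmult: "pscale g (pmult n f h) = pmult n (pscale g f) (pscale g h)"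
proof (rule ext, clarify)
  fix v ws
  have "\<And>j. prod_list (map (bw g) ws) = prod_list (map (bw g) (take j ws)) * prod_list (map (bw g) (drop j ws))"
    by (metis append_take_drop_id map_append prod_list.append)
  then show "pscale g (pmult n f h) (v, ws) = pmult n (pscale g f) (pscale g h) (v, ws)"
    unfolding pscale_apply pmult_def prod.case sum_distrib_left
    by (intro sum.cong) (auto simp: mult_ac)
qed

lemma pscale_padd: "pscale g (padd f h) = padd (pscale g f) (pscale g h)"
  by (rule ext) (auto simp: pscale_def padd_def ring_distribs)

lemma pscale_psmult: "pscale g (psmult c f) = psmult c (pscale g f)"
  by (rule ext) (auto simp: pscale_def psmult_def mult_ac)

lemma pscale_zero[simp]: "pscale g (\<lambda>_. 0) = (\<lambda>_. 0)"
  by (rule ext) (auto simp: pscale_def)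

lemma pscale_punit: "pscale g (punit n) = punit n"
  by (rule ext) (auto simp: pscale_def punit_def)

lemma pelt_pscale[simp]: "pelt n f \<Longrightarrow> pelt n (pscale g f)"
  unfolding pelt_def
  by (auto simp: pscale_def intro: finite_subset[of _ "{p. f p \<noteq> 0}"])

lemma bw_inv: "(\<forall>i. g i \<noteq> 0) \<Longrightarrow> prod_list (map (bw (\<lambda>i. inverse (g i))) ws) * prod_list (map (bw g) ws) = 1"
proof (induction ws)
  case Nil then show ?case by simp
next
  case (Cons a ws)
  have "bw (\<lambda>i. inverse (g i)) a * bw g a = 1" using Cons.prems by (cases a) auto
  then show ?case using Cons by (simp add: mult_ac)
qed

lemma pscale_inv: "(\<forall>i. g i \<noteq> 0) \<Longrightarrow> pscale (\<lambda>i. inverse (g i)) (pscale g f) = f"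
  by (rule ext) (auto simp: pscale_def mult.assoc[symmetric] bw_inv)

lemma pscale_pbasis: "pscale g (pbasis (v, ws)) = psmult (prod_list (map (bw g) ws)) (pbasis (v, ws))"
proof (rule ext, clarify)
  fix a b show "pscale g (pbasis (v, ws)) (a, b) = psmult (prod_list (map (bw g) ws)) (pbasis (v, ws)) (a, b)"
    by (cases "(a, b) = (v, ws)") (auto simp: pscale_def psmult_def pbasis_def)
qed

lemma pscale_brel:
  assumes "\<forall>i. g i \<noteq> 0" "p i = q i * g (Suc i mod n) / g i"
  shows "pscale g (brel n q i) = psmult (g i) (brel n p i)"
proof (rule ext, clarify)
  fix a b
  have gi: "g i \<noteq> 0" using assms by auto
  show "pscale g (brel n q i) (a, b) = psmult (g i) (brel n p i) (a, b)"
    using gi assms(2)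
    by (cases "(a, b) = (i, [Arr_b i, Arr_a i])"; cases "(a, b) = (i, [Arr_a i, Arr_b (Suc i mod n)])")
      (auto simp: brel_def pscale_def psub_def psmult_def pbasis_def field_simps)
qed

lemma pscale_ideal:
  assumes "\<forall>i. g i \<noteq> 0" "\<forall>i<n. p i = q i * g (Suc i mod n) / g i"
  shows "x \<in> rel_ideal n q \<Longrightarrow> pscale g x \<in> rel_ideal n p"
proof (induction rule: rel_ideal.induct)
  case zero then show ?case by (simp add: rel_ideal.zero)
next
  case (gen x y i)
  have "pscale g (pmult n (pmult n x (brel n q i)) y) =
      pmult n (pmult n (psmult (g i) (pscale g x)) (brel n p i)) (pscale g y)"
    using pscale_brel[of g p i q n, OF assms(1) assms(2)[rule_format, OF gen.hyps(3)]]
    by (simp add: pscale_pmult pmult_psmult_left pmult_psmult_right)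
  then show ?case using gen by (simp add: rel_ideal.gen)
next
  case (add f h)
  then show ?case by (simp add: pscale_padd rel_ideal.add)
qed

lemma psub_self: "psub f f = (\<lambda>_. 0)"
  by (simp add: psub_def)

lemma backward:
  fixes g p q :: "nat \<Rightarrow> 'k::field"
  assumes g: "\<forall>i. g i \<noteq> 0" and rel: "\<forall>i<n. p i = q i * g (Suc i mod n) / g i"
  shows "B_iso n q p"
proof -
  let ?gi = "\<lambda>i. inverse (g i)"
  have gi: "\<forall>i. ?gi i \<noteq> 0" using g by simp
  have reli: "\<forall>i<n. q i = p i * ?gi (Suc i mod n) / ?gi i"
    using rel g by (auto simp: field_simps)
  have z: "(\<lambda>_. 0) \<in> rel_ideal n p" by (rule rel_ideal.zero)
  show ?thesis unfolding B_iso_def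
  proof (rule exI[of _ "pscale g"], intro conjI allI impI)
    fix x :: "qpath \<Rightarrow> 'k" assume "pelt n x" then show "pelt n (pscale g x)" by simp
  next
    fix x y :: "qpath \<Rightarrow> 'k"
    show "psub (pscale g (padd x y)) (padd (pscale g x) (pscale g y)) \<in> rel_ideal n p"
      by (simp add: pscale_padd psub_self z)
  next
    fix c and x :: "qpath \<Rightarrow> 'k"
    show "psub (pscale g (psmult c x)) (psmult c (pscale g x)) \<in> rel_ideal n p"
      by (simp add: pscale_psmult psub_self z)
  next
    fix x y :: "qpath \<Rightarrow> 'k"
    show "psub (pscale g (pmult n x y)) (pmult n (pscale g x) (pscale g y)) \<in> rel_ideal n p"
      by (simp add: pscale_pmult psub_self z)
  next
    show "psub (pscale g (punit n)) (punit n) \<in> rel_ideal n p"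
      by (simp add: pscale_punit psub_self z)
  next
    fix x :: "qpath \<Rightarrow> 'k" assume "pelt n x"
    show "pscale g x \<in> rel_ideal n p \<longleftrightarrow> x \<in> rel_ideal n q"
    proof
      assume "pscale g x \<in> rel_ideal n p"
      from pscale_ideal[OF gi reli this] show "x \<in> rel_ideal n q"
        using pscale_inv[OF g] by simp
    next
      assume "x \<in> rel_ideal n q"
      then show "pscale g x \<in> rel_ideal n p" by (rule pscale_ideal[OF g rel])
    qed
  next
    fix y :: "qpath \<Rightarrow> 'k" assume y: "pelt n y"
    show "\<exists>x. pelt n x \<and> psub (pscale g x) y \<in> rel_ideal n p"
      by (rule exI[of _ "pscale ?gi y"])
        (use y pscale_inv[OF gi] in \<open>simp add: psub_self z\<close>)
  qed
qed


abbreviation "ee v \<equiv> pbasis (v, [])"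
abbreviation "AA i \<equiv> pbasis (i, [Arr_a i])"
abbreviation "BB i \<equiv> pbasis (i, [Arr_b i])"

lemma suc_mod_ne: "2 \<le> n \<Longrightarrow> i < n \<Longrightarrow> Suc i mod n \<noteq> i"
proof (cases "Suc i < n")
  case False
  assume "2 \<le> n" "i < n"
  with False have "Suc i = n" by simp
  then show ?thesis using \<open>2 \<le> n\<close> by auto
qed auto

lemma suc_mod_lt: "2 \<le> n \<Longrightarrow> Suc i mod n < n" by simp

locale trihom =
  fixes n :: nat and q :: "nat \<Rightarrow> 'k::field" and H :: "(qpath \<Rightarrow> 'k) \<Rightarrow> 'k poly tri"
  assumes n2: "2 \<le> n"
    and H_add: "\<And>x y. pelt n x \<Longrightarrow> pelt n y \<Longrightarrow> H (padd x y) = H x + H y"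
    and H_smult: "\<And>c x. pelt n x \<Longrightarrow> H (psmult c x) = sc c * H x"
    and H_mult: "\<And>x y. pelt n x \<Longrightarrow> pelt n y \<Longrightarrow> H (pmult n x y) = H x * H y"
    and H_unit: "H (punit n) = 1"
    and H_brel: "\<And>i. i < n \<Longrightarrow> H (brel n q i) = 0"
    and H_zero: "H (\<lambda>_. 0) = 0"
begin

lemma vp_e[simp]: "v < n \<Longrightarrow> valid_path n (v, [])" by (simp add: valid_path_def)
lemma vp_a[simp]: "i < n \<Longrightarrow> valid_path n (i, [Arr_a i])" by (simp add: valid_path_def)
lemma vp_b[simp]: "i < n \<Longrightarrow> valid_path n (i, [Arr_b i])" by (simp add: valid_path_def)

lemma ee_ee: "pmult n (ee v) (ee w) = (if v = w then ee v else (\<lambda>_. 0))"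
  by (simp add: pmult_pbasis)
lemma ee_AA: "pmult n (ee i) (AA i) = AA i"
  by (simp add: pmult_pbasis)
lemma AA_ee: "i < n \<Longrightarrow> pmult n (AA i) (ee i) = (\<lambda>_. 0)"
  using suc_mod_ne[OF n2] by (simp add: pmult_pbasis)
lemma AA_ee': "pmult n (AA i) (ee (Suc i mod n)) = AA i"
  by (simp add: pmult_pbasis)
lemma ee_BB: "pmult n (ee v) (BB w) = (if v = w then BB w else (\<lambda>_. 0))"
  by (simp add: pmult_pbasis)
lemma BB_ee: "pmult n (BB w) (ee v) = (if v = w then BB w else (\<lambda>_. 0))"
  by (auto simp add: pmult_pbasis)
lemma BB_BB: "v \<noteq> w \<Longrightarrow> pmult n (BB v) (BB w) = (\<lambda>_. 0)"
  by (simp add: pmult_pbasis)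

lemma H_neg: "pelt n x \<Longrightarrow> H (psmult (-1) x) = - H x"
  by (simp add: H_smult sc_def tri_eq_iff)

lemma H_psub: "pelt n x \<Longrightarrow> pelt n y \<Longrightarrow> H (psub x y) = H x - H y"
proof -
  assume x: "pelt n x" and y: "pelt n y"
  have "psub x y = padd x (psmult (-1) y)" by (auto simp: psub_def padd_def psmult_def)
  then show ?thesis using x y by (simp add: H_add H_neg)
qed

lemma H_sum: "(\<And>i. i \<in> I \<Longrightarrow> pelt n (G i)) \<Longrightarrow> H (\<Sum>i\<in>I. G i) = (\<Sum>i\<in>I. H (G i))"
proof (induction I rule: infinite_finite_induct)
  case (infinite A) then show ?case using H_zero by (simp add: zero_fun_def)
next
  case empty then show ?case using H_zero by (simp add: zero_fun_def)
next
  case (insert x A)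
  have p1: "pelt n (G x)" and p2: "pelt n (sum G A)" using insert.prems by (auto intro!: pelt_sum)
  have "H (sum G (insert x A)) = H (padd (G x) (sum G A))"
    unfolding sum.insert[OF insert.hyps] padd_eq ..
  also have "\<dots> = H (G x) + H (sum G A)" by (rule H_add[OF p1 p2])
  also have "H (sum G A) = (\<Sum>i\<in>A. H (G i))" using insert.IH insert.prems by blast
  finally show ?case by (simp only: sum.insert[OF insert.hyps])
qed

lemma H_e_idem: "v < n \<Longrightarrow> H (ee v) * H (ee v) = H (ee v)"
  using H_mult[of "ee v" "ee v"] by (simp add: ee_ee)

lemma idem_poly: "(u::'k poly) * u = u \<Longrightarrow> u = 0 \<or> u = 1"
proof -
  assume "u * u = u"
  then have "u * (u - 1) = 0" by (simp add: algebra_simps)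
  then show ?thesis by auto
qed

lemma Ue01: "v < n \<Longrightarrow> tu (H (ee v)) = 0 \<or> tu (H (ee v)) = 1"
  using H_e_idem[of v] by (intro idem_poly) (metis tri_sel_simps(16))
lemma We01: "v < n \<Longrightarrow> tw (H (ee v)) = 0 \<or> tw (H (ee v)) = 1"
  using H_e_idem[of v] by (intro idem_poly) (metis tri_sel_simps(18))

lemma H_e_orth: "v < n \<Longrightarrow> w < n \<Longrightarrow> v \<noteq> w \<Longrightarrow> H (ee v) * H (ee w) = 0"
  using H_mult[of "ee v" "ee w"] H_zero by (simp add: ee_ee)

lemma H_e_sum: "(\<Sum>v<n. H (ee v)) = 1"
  using H_unit unfolding punit_sum by (subst (asm) H_sum) auto

lemma unique_one:
  fixes f :: "nat \<Rightarrow> 'k poly"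
  assumes f01: "\<And>v. v < n \<Longrightarrow> f v = 0 \<or> f v = 1"
    and orth: "\<And>v w. v < n \<Longrightarrow> w < n \<Longrightarrow> v \<noteq> w \<Longrightarrow> f v * f w = 0"
    and sum1: "(\<Sum>v<n. f v) = 1"
  shows "\<exists>a<n. f a = 1 \<and> (\<forall>v<n. v \<noteq> a \<longrightarrow> f v = 0)"
proof -
  obtain a where a: "a < n" "f a \<noteq> 0"
  proof (rule ccontr)
    assume "\<not> thesis"
    then have "\<forall>v<n. f v = 0" using that by blast
    then have "(\<Sum>v<n. f v) = 0" by simp
    then show False using sum1 by simp
  qed
  then have fa: "f a = 1" using f01 by blast
  have "\<forall>v<n. v \<noteq> a \<longrightarrow> f v = 0" using orth[of _ a] fa a by fastforce
  then show ?thesis using a fa by blast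
qed

lemma alpha_ex: "\<exists>a<n. tu (H (ee a)) = 1 \<and> (\<forall>v<n. v \<noteq> a \<longrightarrow> tu (H (ee v)) = 0)"
proof (rule unique_one)
  show "\<And>v. v < n \<Longrightarrow> tu (H (ee v)) = 0 \<or> tu (H (ee v)) = 1" by (rule Ue01)
  show "tu (H (ee v)) * tu (H (ee w)) = 0" if "v < n" "w < n" "v \<noteq> w" for v w
    using arg_cong[OF H_e_orth[OF that], of tu] by simp
  show "(\<Sum>v<n. tu (H (ee v))) = 1" using arg_cong[OF H_e_sum, of tu] by simp
qed

lemma beta_ex: "\<exists>a<n. tw (H (ee a)) = 1 \<and> (\<forall>v<n. v \<noteq> a \<longrightarrow> tw (H (ee v)) = 0)"
proof (rule unique_one)
  show "\<And>v. v < n \<Longrightarrow> tw (H (ee v)) = 0 \<or> tw (H (ee v)) = 1" by (rule We01)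
  show "tw (H (ee v)) * tw (H (ee w)) = 0" if "v < n" "w < n" "v \<noteq> w" for v w
    using arg_cong[OF H_e_orth[OF that], of tw] by simp
  show "(\<Sum>v<n. tw (H (ee v))) = 1" using arg_cong[OF H_e_sum, of tw] by simp
qed


lemma H_A_facts:
  assumes i: "i < n"
  shows "tu (H (AA i)) = 0" "tw (H (AA i)) = 0"
    "tm (H (AA i)) = tu (H (ee i)) * tm (H (AA i)) * tw (H (ee (Suc i mod n)))"
proof -
  have i': "Suc i mod n < n" using i by simp
  have 1: "H (AA i) = H (ee i) * H (AA i)" using H_mult[of "ee i" "AA i"] i by (simp add: ee_AA)
  have 2: "H (AA i) * H (ee i) = 0" using H_mult[of "AA i" "ee i"] i H_zero by (simp add: AA_ee)
  have 3: "H (AA i) = H (ee i) * (H (AA i) * H (ee (Suc i mod n)))"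
    using H_mult[of "AA i" "ee (Suc i mod n)"] H_mult[of "ee i" "pmult n (AA i) (ee (Suc i mod n))"] i i'
    by (simp add: AA_ee' ee_AA)
  have "tu (H (AA i)) = tu (H (AA i)) * tu (H (ee i))" using arg_cong[OF 1, of tu] by (simp add: mult.commute)
  also have "\<dots> = 0" using arg_cong[OF 2, of tu] by simp
  finally show u: "tu (H (AA i)) = 0" .
  have "tw (H (AA i)) = tw (H (AA i)) * tw (H (ee i))" using arg_cong[OF 1, of tw] by (simp add: mult.commute)
  also have "\<dots> = 0" using arg_cong[OF 2, of tw] by simp
  finally show w: "tw (H (AA i)) = 0" .
  show "tm (H (AA i)) = tu (H (ee i)) * tm (H (AA i)) * tw (H (ee (Suc i mod n)))"
    using arg_cong[OF 3, of tm] u w by (simp add: mult.assoc)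
qed

lemma H_A_eq: "i < n \<Longrightarrow> H (AA i) = Tri 0 (tm (H (AA i))) 0"
  using H_A_facts[of i] by (simp add: tri_eq_iff)

lemma brel_split: "brel n q i = psub (pmult n (BB i) (AA i)) (psmult (q i) (pmult n (AA i) (BB (Suc i mod n))))"
  by (simp add: brel_def pmult_pbasis)

lemma H_rel:
  assumes i: "i < n"
  shows "tu (H (BB i)) * tm (H (AA i)) = smult (q i) (tm (H (AA i)) * tw (H (BB (Suc i mod n))))"
proof -
  have i': "Suc i mod n < n" using i by simp
  have "0 = H (brel n q i)" using H_brel[OF i] by simp
  also have "\<dots> = H (BB i) * H (AA i) - sc (q i) * (H (AA i) * H (BB (Suc i mod n)))"
    unfolding brel_split using i i' by (simp add: H_psub H_smult H_mult)
  finally have "tm (H (BB i) * H (AA i)) = tm (sc (q i) * (H (AA i) * H (BB (Suc i mod n))))"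
    by (metis eq_iff_diff_eq_0)
  then show ?thesis using H_A_facts[OF i] by (simp add: sc_mult_left)
qed

lemma comm_gen:
  assumes A0: "\<And>i. i < n \<Longrightarrow> H (AA i) = 0"
    and ge: "\<And>v. v < n \<Longrightarrow> g * H (ee v) = H (ee v) * g"
    and gb: "\<And>v. v < n \<Longrightarrow> g * H (BB v) = H (BB v) * g"
    and x: "pelt n x"
  shows "g * H x = H x * g"
  using x
proof (induction rule: kq_induct)
  case zero then show ?case by (simp add: H_zero)
next
  case (add f h) then show ?case by (simp add: H_add ring_distribs)
next
  case (smult c f)
  have "g * H (psmult c f) = (g * sc c) * H f" using smult by (simp add: H_smult mult.assoc)
  also have "\<dots> = sc c * (g * H f)" by (simp add: sc_central mult.assoc)
  also have "\<dots> = sc c * (H f * g)" using smult by simp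
  also have "\<dots> = H (psmult c f) * g" using smult by (simp add: H_smult mult.assoc)
  finally show ?case .
next
  case (mult f h)
  have "g * H (pmult n f h) = (g * H f) * H h" using mult(1,2) by (simp add: H_mult mult.assoc)
  also have "\<dots> = H f * (g * H h)" using mult(3) by (metis mult.assoc)
  also have "\<dots> = H (pmult n f h) * g" using mult(1,2,4) by (simp add: H_mult mult.assoc)
  finally show ?case .
next
  case (ev v) then show ?case by (rule ge)
next
  case (ea i) then show ?case using A0 by simp
next
  case (eb i) then show ?case by (rule gb)
qed

lemma comm_all:
  assumes A0: "\<And>i. i < n \<Longrightarrow> tm (H (AA i)) = 0"
    and x: "pelt n x" and y: "pelt n y"
  shows "H x * H y = H y * H x"
proof -
  have A0': "\<And>i. i < n \<Longrightarrow> H (AA i) = 0" using A0 H_A_eq by (simp add: tri_eq_iff)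
  have ee_c: "H (ee w) * H (ee v) = H (ee v) * H (ee w)" if "v < n" "w < n" for v w
    using H_mult[of "ee w" "ee v"] H_mult[of "ee v" "ee w"] that by (cases "v = w") (auto simp: ee_ee)
  have eb_c: "H (ee w) * H (BB v) = H (BB v) * H (ee w)" if "v < n" "w < n" for v w
    using H_mult[of "ee w" "BB v"] H_mult[of "BB v" "ee w"] that by (simp add: ee_BB BB_ee)
  have bb_c: "H (BB w) * H (BB v) = H (BB v) * H (BB w)" if "v < n" "w < n" for v w
  proof (cases "v = w")
    case False
    then show ?thesis using H_mult[of "BB w" "BB v"] H_mult[of "BB v" "BB w"] that by (simp add: BB_BB)
  qed simp
  have s1: "H (ee w) * H z = H z * H (ee w)" "H (BB w) * H z = H z * H (BB w)"
    if "w < n" "pelt n z" for w z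
  proof -
    show "H (ee w) * H z = H z * H (ee w)"
    proof (rule comm_gen)
      show "\<And>i. i < n \<Longrightarrow> H (AA i) = 0" by (rule A0')
      show "\<And>v. v < n \<Longrightarrow> H (ee w) * H (ee v) = H (ee v) * H (ee w)" using ee_c that by blast
      show "\<And>v. v < n \<Longrightarrow> H (ee w) * H (BB v) = H (BB v) * H (ee w)" using eb_c that by blast
      show "pelt n z" by (rule that(2))
    qed
    show "H (BB w) * H z = H z * H (BB w)"
    proof (rule comm_gen)
      show "\<And>i. i < n \<Longrightarrow> H (AA i) = 0" by (rule A0')
      show "\<And>v. v < n \<Longrightarrow> H (BB w) * H (ee v) = H (ee v) * H (BB w)" using eb_c that by metis
      show "\<And>v. v < n \<Longrightarrow> H (BB w) * H (BB v) = H (BB v) * H (BB w)" using bb_c that by blast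
      show "pelt n z" by (rule that(2))
    qed
  qed
  show ?thesis
  proof (rule comm_gen)
    show "\<And>i. i < n \<Longrightarrow> H (AA i) = 0" by (rule A0')
    show "\<And>v. v < n \<Longrightarrow> H x * H (ee v) = H (ee v) * H x" using s1(1) x by metis
    show "\<And>v. v < n \<Longrightarrow> H x * H (BB v) = H (BB v) * H x" using s1(2) x by metis
    show "pelt n y" by (rule y)
  qed
qed

lemma pcompose_one: "pcompose 1 (r::'k poly) = 1"
  by (metis one_pCons pcompose_const)

lemma deg_sel:
  fixes sel :: "'k poly tri \<Rightarrow> 'k poly"
  assumes sel_add: "\<And>x y. sel (x + y) = sel x + sel y"
    and sel_mult: "\<And>x y. sel (x * y) = sel x * sel y"
    and sel_sc: "\<And>c x. sel (sc c * x) = smult c (sel x)"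
    and sel_0: "sel 0 = 0"
    and sel_e01: "\<And>v. v < n \<Longrightarrow> sel (H (ee v)) = 0 \<or> sel (H (ee v)) = 1"
    and sel_A: "\<And>i. i < n \<Longrightarrow> sel (H (AA i)) = 0"
    and a: "a < n" and ea0: "\<And>v. v < n \<Longrightarrow> v \<noteq> a \<Longrightarrow> sel (H (ee v)) = 0"
    and x: "pelt n x" and xd: "degree (sel (H x)) = 1"
  shows "degree (sel (H (BB a))) = 1"
proof -
  let ?u = "sel (H (BB a))"
  have "\<exists>h. sel (H x) = pcompose h ?u"
    using x
  proof (induction rule: kq_induct)
    case zero then show ?case using H_zero sel_0 by (intro exI[of _ 0]) simp
  next
    case (add f g)
    then obtain h1 h2 where "sel (H f) = pcompose h1 ?u" "sel (H g) = pcompose h2 ?u" by blast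
    then show ?case using add by (intro exI[of _ "h1 + h2"]) (simp add: H_add sel_add pcompose_add)
  next
    case (smult c f)
    then obtain h1 where "sel (H f) = pcompose h1 ?u" by blast
    then show ?case using smult by (intro exI[of _ "smult c h1"]) (simp add: H_smult sel_sc pcompose_smult)
  next
    case (mult f g)
    then obtain h1 h2 where "sel (H f) = pcompose h1 ?u" "sel (H g) = pcompose h2 ?u" by blast
    then show ?case using mult by (intro exI[of _ "h1 * h2"]) (simp add: H_mult sel_mult pcompose_mult)
  next
    case (ev v)
    then show ?case using sel_e01[OF ev]
      by (elim disjE) (rule exI[of _ 0], simp, rule exI[of _ 1], simp add: pcompose_one)
  next
    case (ea i) then show ?case using sel_A by (intro exI[of _ 0]) simp
  next
    case (eb v)
    show ?case
    proof (cases "v = a")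
      case True then show ?thesis by (intro exI[of _ "[:0, 1:]"]) (simp add: pcompose_pCons)
    next
      case False
      have "H (BB v) = H (ee v) * H (BB v)" using H_mult[of "ee v" "BB v"] eb by (simp add: ee_BB)
      then have "sel (H (BB v)) = 0" using ea0[OF eb False] sel_mult by (metis mult_zero_left)
      then show ?thesis by (intro exI[of _ 0]) simp
    qed
  qed
  then obtain h where "sel (H x) = pcompose h ?u" by blast
  then have "degree h * degree ?u = 1" using xd by (simp add: degree_pcompose)
  then show ?thesis by simp
qed


lemma trihom_main:
  assumes surj_e: "\<exists>x. pelt n x \<and> H x = Tri 1 0 0"
    and surj_a: "\<exists>x. pelt n x \<and> H x = Tri 0 1 0"
    and surj_bu: "\<exists>x. pelt n x \<and> degree (tu (H x)) = 1"
    and surj_bw: "\<exists>x. pelt n x \<and> degree (tw (H x)) = 1"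
  shows "\<exists>i<n. tu (H (ee i)) = 1 \<and> (\<forall>v<n. v \<noteq> i \<longrightarrow> tu (H (ee v)) = 0)
     \<and> tw (H (ee (Suc i mod n))) = 1 \<and> (\<forall>v<n. v \<noteq> Suc i mod n \<longrightarrow> tw (H (ee v)) = 0)
     \<and> degree (tu (H (BB i))) = 1 \<and> degree (tw (H (BB (Suc i mod n)))) = 1
     \<and> tu (H (BB i)) = smult (q i) (tw (H (BB (Suc i mod n))))"
proof -
  obtain i where i: "i < n" and m: "tm (H (AA i)) \<noteq> 0"
  proof (rule ccontr)
    assume "\<not> thesis"
    then have A0: "\<And>i. i < n \<Longrightarrow> tm (H (AA i)) = 0" using that by blast
    obtain x1 where x1: "pelt n x1" "H x1 = Tri 1 0 0" using surj_e by blast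
    obtain x2 where x2: "pelt n x2" "H x2 = Tri 0 1 0" using surj_a by blast
    have "H x1 * H x2 = H x2 * H x1" by (rule comm_all[OF A0 x1(1) x2(1)])
    then show False using x1 x2 by (simp add: tri_eq_iff)
  qed
  let ?i' = "Suc i mod n"
  have i': "?i' < n" using i by simp
  have mt: "tm (H (AA i)) = tu (H (ee i)) * tm (H (AA i)) * tw (H (ee ?i'))" by (rule H_A_facts(3)[OF i])
  have u1: "tu (H (ee i)) = 1" using Ue01[OF i] mt m by auto
  have w1: "tw (H (ee ?i')) = 1" using We01[OF i'] mt m by auto
  obtain a where a: "a < n" "tu (H (ee a)) = 1" "\<forall>v<n. v \<noteq> a \<longrightarrow> tu (H (ee v)) = 0"
    using alpha_ex by blast
  have ia: "i = a" using a u1 i by force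
  obtain b where b: "b < n" "tw (H (ee b)) = 1" "\<forall>v<n. v \<noteq> b \<longrightarrow> tw (H (ee v)) = 0"
    using beta_ex by blast
  have ib: "?i' = b" using b(3) w1 i' by (metis zero_neq_one)
  obtain xu where xu: "pelt n xu" "degree (tu (H xu)) = 1" using surj_bu by blast
  obtain xw where xw: "pelt n xw" "degree (tw (H xw)) = 1" using surj_bw by blast
  have du: "degree (tu (H (BB i))) = 1"
    by (rule deg_sel[of tu a xu, unfolded ia[symmetric]])
      (use Ue01 H_A_facts(1) a xu ia in \<open>auto simp: sc_mult_left\<close>)
  have dw: "degree (tw (H (BB ?i'))) = 1"
    by (rule deg_sel[of tw b xw, unfolded ib[symmetric]])
      (use We01 H_A_facts(2) b xw ib in \<open>auto simp: sc_mult_left\<close>)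
  have "(tu (H (BB i)) - smult (q i) (tw (H (BB ?i')))) * tm (H (AA i)) = 0"
    using H_rel[OF i] by (simp add: algebra_simps)
  then have rel: "tu (H (BB i)) = smult (q i) (tw (H (BB ?i')))" using m by simp
  show ?thesis
    using i u1 w1 a(3) b(3) ia ib du dw rel by blast
qed

end


definition Ej :: "nat \<Rightarrow> nat \<Rightarrow> nat \<Rightarrow> 'k::field poly tri" where
  "Ej n j v = (if v = j then Tri 1 0 0 else 0) + (if v = Suc j mod n then Tri 0 0 1 else 0)"

definition rj :: "nat \<Rightarrow> (nat \<Rightarrow> 'k::field) \<Rightarrow> nat \<Rightarrow> arr \<Rightarrow> 'k poly tri" where
  "rj n p j a = (case a of Arr_a i \<Rightarrow> (if i = j then Tri 0 1 0 else 0)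
     | Arr_b i \<Rightarrow> (if i = j then Tri [:0, 1:] 0 0 else 0)
         + (if i = Suc j mod n then Tri 0 0 [:0, inverse (p j):] else 0))"

definition rho :: "nat \<Rightarrow> (nat \<Rightarrow> 'k::field) \<Rightarrow> nat \<Rightarrow> (qpath \<Rightarrow> 'k) \<Rightarrow> 'k poly tri" where
  "rho n p j = Hrep (Ej n j) (rj n p j)"

lemma Ej_sel:
  "tu (Ej n j v) = (if v = j then 1 else 0)"
  "tm (Ej n j v) = 0"
  "tw (Ej n j v) = (if v = Suc j mod n then 1 else 0)"
  by (auto simp: Ej_def)

lemma rj_sel:
  "tu (rj n p j (Arr_a i)) = 0" "tm (rj n p j (Arr_a i)) = (if i = j then 1 else 0)"
  "tw (rj n p j (Arr_a i)) = 0"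
  "tu (rj n p j (Arr_b i)) = (if i = j then [:0, 1:] else 0)" "tm (rj n p j (Arr_b i)) = 0"
  "tw (rj n p j (Arr_b i)) = (if i = Suc j mod n then [:0, inverse (p j):] else 0)"
  by (auto simp: rj_def)

lemma rep_j:
  assumes n2: "2 \<le> n" and j: "j < n"
  shows "rep n (Ej n j) (rj n p j)"
proof -
  have ne: "Suc j mod n \<noteq> j" by (rule suc_mod_ne[OF n2 j])
  show ?thesis
  proof
    fix v w assume "v < n" "w < n"
    show "Ej n j v * Ej n j w = (if v = w then Ej n j v else 0)"
      using ne by (auto simp: tri_eq_iff Ej_sel)
  next
    fix i assume "i < n"
    show "rj n p j (Arr_a i) = Ej n j i * rj n p j (Arr_a i) * Ej n j (Suc i mod n)"
      using ne by (auto simp: tri_eq_iff Ej_sel rj_sel)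
  next
    fix i assume "i < n"
    show "rj n p j (Arr_b i) = Ej n j i * rj n p j (Arr_b i) * Ej n j i"
      using ne by (auto simp: tri_eq_iff Ej_sel rj_sel)
  qed
qed


lemma pathval_simps:
  "pathval E r (v, []) = E v"
  "pathval E r (v, [a]) = E v * r a"
  "pathval E r (v, [a, b]) = E v * r a * r b"
  by (auto simp: pathval_def mult.assoc)

lemma rho_brel:
  assumes n2: "2 \<le> n" and j: "j < n" and i: "i < n" and pj: "p j \<noteq> 0"
  shows "rho n p j (brel n p i) = 0"
proof -
  have ne: "Suc j mod n \<noteq> j" by (rule suc_mod_ne[OF n2 j])
  have v1: "valid_path n (i, [Arr_b i, Arr_a i])" and v2: "valid_path n (i, [Arr_a i, Arr_b (Suc i mod n)])"
    using i by (auto simp: valid_path_def)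
  have "rho n p j (brel n p i) = pathval (Ej n j) (rj n p j) (i, [Arr_b i, Arr_a i])
      - sc (p i) * pathval (Ej n j) (rj n p j) (i, [Arr_a i, Arr_b (Suc i mod n)])"
    unfolding rho_def brel_def
    using v1 v2 by (simp add: Hrep_psub[of n] Hrep_psmult[of n])
  also have "\<dots> = 0"
    using ne pj by (cases "i = j") (auto simp: pathval_simps tri_eq_iff Ej_sel rj_sel sc_mult_left)
  finally show ?thesis .
qed

lemma rho_ideal:
  assumes n2: "2 \<le> n" and j: "j < n" and pnz: "\<forall>i<n. p i \<noteq> 0"
  shows "x \<in> rel_ideal n p \<Longrightarrow> rho n p j x = 0"
  unfolding rho_def
  by (rule rep.Hrep_ideal[OF rep_j[OF n2 j]]) (use rho_brel[OF n2 j] pnz j in \<open>auto simp: rho_def\<close>)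

lemma rho_cong:
  assumes n2: "2 \<le> n" and j: "j < n" and pnz: "\<forall>i<n. p i \<noteq> 0"
    and a: "pelt n a" and b: "pelt n b" and ab: "psub a b \<in> rel_ideal n p"
  shows "rho n p j a = rho n p j b"
proof -
  have "rho n p j (psub a b) = 0" by (rule rho_ideal[OF n2 j pnz ab])
  then show ?thesis using a b by (simp add: rho_def Hrep_psub[of n])
qed

lemma rho_punit:
  assumes n2: "2 \<le> n" and j: "j < n"
  shows "rho n p j (punit n) = 1"
proof -
  have j': "Suc j mod n < n" using j by simp
  have "rho n p j (punit n) = (\<Sum>v<n. Ej n j v)"
    unfolding rho_def by (rule rep.Hrep_punit[OF rep_j[OF n2 j]])
  also have "\<dots> = 1"
    using j j' suc_mod_ne[OF n2 j] by (simp add: tri_eq_iff Ej_sel sum.delta)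
  finally show ?thesis .
qed

lemma rho_gens:
  assumes n2: "2 \<le> n" and j: "j < n"
  shows "rho n p j (ee j) = Tri 1 0 0" "rho n p j (AA j) = Tri 0 1 0"
    "rho n p j (BB j) = Tri [:0, 1:] 0 0"
    "rho n p j (BB (Suc j mod n)) = Tri 0 0 [:0, inverse (p j):]"
  using suc_mod_ne[OF n2 j]
  by (auto simp: rho_def pathval_simps tri_eq_iff Ej_sel rj_sel)


lemma pcompose_one': "pcompose 1 (r::'k::field poly) = 1"
  by (metis one_pCons pcompose_const)

lemma rho_link:
  assumes n2: "2 \<le> n" and j: "j < n" and y: "pelt n y"
  shows "tw (rho n p j y) = pcompose (tu (rho n p (Suc j mod n) y)) [:0, inverse (p j):]"
  using y
proof (induction rule: kq_induct)
  case zero then show ?case by (simp add: rho_def)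
next
  case (add f g)
  then show ?case by (simp add: rho_def Hrep_padd[of n] pcompose_add)
next
  case (smult c f)
  then show ?case by (simp add: rho_def Hrep_psmult[of n] sc_mult_left pcompose_smult)
next
  case (mult f g)
  have j': "Suc j mod n < n" using j by simp
  show ?case using mult
    by (simp add: rho_def rep.Hrep_mult[OF rep_j[OF n2 j]] rep.Hrep_mult[OF rep_j[OF n2 j']] pcompose_mult)
next
  case (ev v)
  then show ?case by (simp add: rho_def pathval_simps Ej_sel pcompose_one')
next
  case (ea i)
  then show ?case by (simp add: rho_def pathval_simps Ej_sel rj_sel)
next
  case (eb i)
  then show ?case by (simp add: rho_def pathval_simps Ej_sel rj_sel pcompose_pCons)
qed

lemma prod_shift1:
  fixes n :: nat
  assumes "0 < n"
  shows "(\<Prod>j<n. g (Suc j mod n)) = (\<Prod>j<n. (g j :: 'a::comm_monoid_mult))"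
proof -
  obtain m where m: "n = Suc m" using assms by (cases n) auto
  have "(\<Prod>j<Suc m. g (Suc j mod Suc m)) = (\<Prod>j<m. g (Suc j mod Suc m)) * g (Suc m mod Suc m)"
    by (simp add: prod.lessThan_Suc)
  also have "\<dots> = (\<Prod>j<m. g (Suc j)) * g 0"
  proof -
    have "(\<Prod>j<m. g (Suc j mod Suc m)) = (\<Prod>j<m. g (Suc j))" by (rule prod.cong) auto
    then show ?thesis by simp
  qed
  also have "\<dots> = g 0 * (\<Prod>j<m. g (Suc j))" by (simp add: mult.commute)
  also have "\<dots> = (\<Prod>j<Suc m. g j)" by (rule prod.lessThan_Suc_shift[symmetric])
  finally show ?thesis using m by simp
qed

lemma prod_rot:
  fixes n c :: nat
  assumes "0 < n"
  shows "(\<Prod>j<n. f ((j + c) mod n)) = (\<Prod>j<n. (f j :: 'a::comm_monoid_mult))"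
proof (induction c)
  case 0 then show ?case by (intro prod.cong) auto
next
  case (Suc c)
  have "(\<Prod>j<n. f ((j + Suc c) mod n)) = (\<Prod>j<n. (\<lambda>i. f ((i + c) mod n)) (Suc j mod n))"
  proof (rule prod.cong)
    fix x
    have "(Suc x mod n + c) mod n = (Suc x + c) mod n" by (rule mod_add_left_eq)
    moreover have "Suc x + c = x + Suc c" by simp
    ultimately show "f ((x + Suc c) mod n) = (\<lambda>i. f ((i + c) mod n)) (Suc x mod n)" by simp
  qed simp
  also have "\<dots> = (\<Prod>j<n. f ((j + c) mod n))" by (rule prod_shift1[OF assms])
  finally show ?case using Suc by simp
qed


locale fwd =
  fixes n :: nat and q p :: "nat \<Rightarrow> 'k::field" and \<Phi> :: "(qpath \<Rightarrow> 'k) \<Rightarrow> (qpath \<Rightarrow> 'k)"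
  assumes n2: "2 \<le> n" and pnz: "\<forall>i<n. p i \<noteq> 0"
    and \<Phi>_pelt: "\<forall>x. pelt n x \<longrightarrow> pelt n (\<Phi> x)"
    and \<Phi>_add: "\<forall>x y. pelt n x \<longrightarrow> pelt n y \<longrightarrow> psub (\<Phi> (padd x y)) (padd (\<Phi> x) (\<Phi> y)) \<in> rel_ideal n p"
    and \<Phi>_smult: "\<forall>c x. pelt n x \<longrightarrow> psub (\<Phi> (psmult c x)) (psmult c (\<Phi> x)) \<in> rel_ideal n p"
    and \<Phi>_mult: "\<forall>x y. pelt n x \<longrightarrow> pelt n y \<longrightarrow> psub (\<Phi> (pmult n x y)) (pmult n (\<Phi> x) (\<Phi> y)) \<in> rel_ideal n p"
    and \<Phi>_unit: "psub (\<Phi> (punit n)) (punit n) \<in> rel_ideal n p"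
    and \<Phi>_ker: "\<forall>x. pelt n x \<longrightarrow> (\<Phi> x \<in> rel_ideal n p \<longleftrightarrow> x \<in> rel_ideal n q)"
    and \<Phi>_surj: "\<forall>y. pelt n y \<longrightarrow> (\<exists>x. pelt n x \<and> psub (\<Phi> x) y \<in> rel_ideal n p)"
begin

definition H :: "nat \<Rightarrow> (qpath \<Rightarrow> 'k) \<Rightarrow> 'k poly tri" where
  "H j x = rho n p j (\<Phi> x)"

lemma n0: "0 < n" using n2 by simp

lemma rcong: "j < n \<Longrightarrow> pelt n a \<Longrightarrow> pelt n b \<Longrightarrow> psub a b \<in> rel_ideal n p \<Longrightarrow> rho n p j a = rho n p j b"
  by (rule rho_cong[OF n2 _ pnz])

lemma Pp: "pelt n x \<Longrightarrow> pelt n (\<Phi> x)" using \<Phi>_pelt by blast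

lemma trihom_j:
  assumes j: "j < n"
  shows "trihom n q (H j)"
proof
  show "2 \<le> n" by (rule n2)
next
  fix x y :: "qpath \<Rightarrow> 'k" assume x: "pelt n x" and y: "pelt n y"
  have "H j (padd x y) = rho n p j (padd (\<Phi> x) (\<Phi> y))"
    unfolding H_def by (rule rcong[OF j]) (use x y \<Phi>_add Pp in auto)
  also have "\<dots> = H j x + H j y" using x y Pp by (simp add: H_def rho_def Hrep_padd[of n])
  finally show "H j (padd x y) = H j x + H j y" .
next
  fix c and x :: "qpath \<Rightarrow> 'k" assume x: "pelt n x"
  have "H j (psmult c x) = rho n p j (psmult c (\<Phi> x))"
    unfolding H_def by (rule rcong[OF j]) (use x \<Phi>_smult Pp in auto)
  also have "\<dots> = sc c * H j x" using x Pp by (simp add: H_def rho_def Hrep_psmult[of n])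
  finally show "H j (psmult c x) = sc c * H j x" .
next
  fix x y :: "qpath \<Rightarrow> 'k" assume x: "pelt n x" and y: "pelt n y"
  have "H j (pmult n x y) = rho n p j (pmult n (\<Phi> x) (\<Phi> y))"
    unfolding H_def by (rule rcong[OF j]) (use x y \<Phi>_mult Pp in auto)
  also have "\<dots> = H j x * H j y"
    using x y Pp by (simp add: H_def rho_def rep.Hrep_mult[OF rep_j[OF n2 j]])
  finally show "H j (pmult n x y) = H j x * H j y" .
next
  have "H j (punit n) = rho n p j (punit n)"
    unfolding H_def by (rule rcong[OF j]) (use \<Phi>_unit Pp in auto)
  then show "H j (punit n) = 1" using rho_punit[OF n2 j] by simp
next
  fix i assume i: "i < n"
  have "brel n q i \<in> rel_ideal n q" by (rule brel_in[OF n0 i])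
  then have "\<Phi> (brel n q i) \<in> rel_ideal n p" using \<Phi>_ker i by auto
  then show "H j (brel n q i) = 0" unfolding H_def by (rule rho_ideal[OF n2 j pnz])
next
  have "(\<lambda>_. 0) \<in> rel_ideal n q" by (rule rel_ideal.zero)
  then have "\<Phi> (\<lambda>_. 0) \<in> rel_ideal n p" using \<Phi>_ker by auto
  then show "H j (\<lambda>_. 0) = 0" unfolding H_def by (rule rho_ideal[OF n2 j pnz])
qed

lemma surj_j:
  assumes j: "j < n" and y: "pelt n y"
  shows "\<exists>x. pelt n x \<and> H j x = rho n p j y"
proof -
  obtain x where x: "pelt n x" "psub (\<Phi> x) y \<in> rel_ideal n p" using \<Phi>_surj y by blast
  then show ?thesis unfolding H_def using rcong[OF j Pp[OF x(1)] y x(2)] by blast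
qed

lemma main_j:
  assumes j: "j < n"
  shows "\<exists>i<n. tu (H j (ee i)) = 1 \<and> (\<forall>v<n. v \<noteq> i \<longrightarrow> tu (H j (ee v)) = 0)
     \<and> tw (H j (ee (Suc i mod n))) = 1 \<and> (\<forall>v<n. v \<noteq> Suc i mod n \<longrightarrow> tw (H j (ee v)) = 0)
     \<and> degree (tu (H j (BB i))) = 1 \<and> degree (tw (H j (BB (Suc i mod n)))) = 1
     \<and> tu (H j (BB i)) = smult (q i) (tw (H j (BB (Suc i mod n))))"
proof (rule trihom.trihom_main[OF trihom_j[OF j]])
  have j': "Suc j mod n < n" using j by simp
  note g = rho_gens[OF n2 j, of p]
  show "\<exists>x. pelt n x \<and> H j x = Tri 1 0 0"
    using surj_j[OF j, of "ee j"] j g by (auto simp: valid_path_def)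
  show "\<exists>x. pelt n x \<and> H j x = Tri 0 1 0"
    using surj_j[OF j, of "AA j"] j g by (auto simp: valid_path_def)
  show "\<exists>x. pelt n x \<and> degree (tu (H j x)) = 1"
    using surj_j[OF j, of "BB j"] j g by (auto simp: valid_path_def)
  have "p j \<noteq> 0" using pnz j by auto
  then show "\<exists>x. pelt n x \<and> degree (tw (H j x)) = 1"
    using surj_j[OF j, of "BB (Suc j mod n)"] j' g by (auto simp: valid_path_def)
qed

lemma link_j:
  assumes j: "j < n" and x: "pelt n x"
  shows "tw (H j x) = pcompose (tu (H (Suc j mod n) x)) [:0, inverse (p j):]"
  unfolding H_def by (rule rho_link[OF n2 j Pp[OF x]])


definition PJ :: "nat \<Rightarrow> nat \<Rightarrow> bool" where
  "PJ j i \<longleftrightarrow> i < n \<and> tu (H j (ee i)) = 1 \<and> (\<forall>v<n. v \<noteq> i \<longrightarrow> tu (H j (ee v)) = 0)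
     \<and> tw (H j (ee (Suc i mod n))) = 1 \<and> (\<forall>v<n. v \<noteq> Suc i mod n \<longrightarrow> tw (H j (ee v)) = 0)
     \<and> degree (tu (H j (BB i))) = 1 \<and> degree (tw (H j (BB (Suc i mod n)))) = 1
     \<and> tu (H j (BB i)) = smult (q i) (tw (H j (BB (Suc i mod n))))"

definition I :: "nat \<Rightarrow> nat" where "I j = (SOME i. PJ j i)"

lemma I_prop: "j < n \<Longrightarrow> PJ j (I j)"
  unfolding I_def by (rule someI_ex) (use main_j in \<open>auto simp: PJ_def\<close>)

lemma I_step:
  assumes j: "j < n"
  shows "I (Suc j mod n) = Suc (I j) mod n"
proof -
  let ?j' = "Suc j mod n" and ?v = "Suc (I j) mod n"
  have j': "?j' < n" using j by simp
  have P: "PJ j (I j)" and P': "PJ ?j' (I ?j')" using I_prop j j' by auto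
  have v: "?v < n" using n0 by simp
  have "tw (H j (ee ?v)) = pcompose (tu (H ?j' (ee ?v))) [:0, inverse (p j):]"
    by (rule link_j[OF j]) (use v in \<open>simp add: valid_path_def\<close>)
  moreover have "tw (H j (ee ?v)) = 1" using P by (simp add: PJ_def)
  ultimately have "pcompose (tu (H ?j' (ee ?v))) [:0, inverse (p j):] = 1" by simp
  moreover have "tu (H ?j' (ee ?v)) = 0 \<or> tu (H ?j' (ee ?v)) = 1"
    by (rule trihom.Ue01[OF trihom_j[OF j'] v])
  ultimately have "tu (H ?j' (ee ?v)) = 1" by auto
  then show ?thesis using P' v unfolding PJ_def by (metis zero_neq_one)
qed

lemma I_rot: "j < n \<Longrightarrow> I j = (j + I 0) mod n"
proof (induction j)
  case 0 then show ?case using I_prop[OF n0] by (simp add: PJ_def)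
next
  case (Suc j)
  then have j: "j < n" by simp
  have "I (Suc j) = I (Suc j mod n)" using Suc.prems by simp
  also have "\<dots> = Suc (I j) mod n" by (rule I_step[OF j])
  also have "\<dots> = Suc ((j + I 0) mod n) mod n" using Suc.IH j by simp
  also have "\<dots> = (Suc j + I 0) mod n" by (simp add: mod_Suc_eq)
  finally show ?case .
qed

definition lam :: "nat \<Rightarrow> 'k" where "lam j = coeff (tu (H j (BB (I j)))) 1"

lemma lam_nz: "j < n \<Longrightarrow> lam j \<noteq> 0"
proof -
  assume j: "j < n"
  have d: "degree (tu (H j (BB (I j)))) = 1" using I_prop[OF j] unfolding PJ_def by blast
  then have "tu (H j (BB (I j))) \<noteq> 0" by auto
  then have "lead_coeff (tu (H j (BB (I j)))) \<noteq> 0" by simp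
  then show ?thesis using d by (simp add: lam_def)
qed

lemma lam_rel:
  assumes j: "j < n"
  shows "p j * lam j = q (I j) * lam (Suc j mod n)"
proof -
  let ?j' = "Suc j mod n"
  have j': "?j' < n" using j by simp
  have P: "PJ j (I j)" using I_prop j by auto
  have Ij: "I j < n" using P by (simp add: PJ_def)
  have st: "Suc (I j) mod n = I ?j'" using I_step[OF j] by simp
  have Ij': "I ?j' < n" using I_prop[OF j'] by (simp add: PJ_def)
  have "tu (H j (BB (I j))) = smult (q (I j)) (tw (H j (BB (Suc (I j) mod n))))"
    using P unfolding PJ_def by blast
  also have "Suc (I j) mod n = I ?j'" by (rule st)
  also have "tw (H j (BB (I ?j'))) = pcompose (tu (H ?j' (BB (I ?j')))) [:0, inverse (p j):]"
    by (rule link_j[OF j]) (use Ij' in \<open>simp add: valid_path_def\<close>)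
  finally have "lam j = q (I j) * (inverse (p j) * lam ?j')"
    unfolding lam_def by (simp add: coeff_pcompose_linear)
  moreover have "p j \<noteq> 0" using pnz j by auto
  ultimately show ?thesis by (simp add: field_simps)
qed

lemma prod_eq: "(\<Prod>i<n. p i) = (\<Prod>i<n. q i)"
proof -
  have L: "(\<Prod>j<n. p j * lam j) = (\<Prod>j<n. q (I j) * lam (Suc j mod n))"
  proof (rule prod.cong)
    fix j assume "j \<in> {..<n}"
    then show "p j * lam j = q (I j) * lam (Suc j mod n)" using lam_rel by blast
  qed (rule refl)
  have Q: "(\<Prod>j<n. q (I j)) = (\<Prod>j<n. q ((j + I 0) mod n))"
  proof (rule prod.cong)
    fix j assume "j \<in> {..<n}"
    then have "I j = (j + I 0) mod n" using I_rot by blast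
    then show "q (I j) = q ((j + I 0) mod n)" by (rule arg_cong)
  qed (rule refl)
  have "(\<Prod>j<n. p j) * (\<Prod>j<n. lam j) = (\<Prod>j<n. p j * lam j)"
    by (rule prod.distrib[symmetric])
  also have "\<dots> = (\<Prod>j<n. q (I j)) * (\<Prod>j<n. lam (Suc j mod n))"
    unfolding L by (rule prod.distrib)
  also have "\<dots> = (\<Prod>j<n. q j) * (\<Prod>j<n. lam j)"
    unfolding Q prod_rot[OF n0, of q "I 0"] prod_shift1[OF n0, of lam] ..
  finally have eq: "(\<Prod>j<n. p j) * (\<Prod>j<n. lam j) = (\<Prod>j<n. q j) * (\<Prod>j<n. lam j)" .
  have "(\<Prod>j<n. lam j) \<noteq> 0" using lam_nz by (simp add: prod_zero_iff)
  with eq show ?thesis by simp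
qed

end


lemma prod_from_alpha:
  fixes p q \<alpha> :: "nat \<Rightarrow> 'k::field"
  assumes n: "0 < n" and anz: "\<forall>i<n. \<alpha> i \<noteq> 0"
    and rel: "\<forall>i<n. p i = \<alpha> ((i + k + 1) mod n) / \<alpha> ((i + k) mod n) * q ((i + k) mod n)"
  shows "(\<Prod>i<n. p i) = (\<Prod>i<n. q i)"
proof -
  have "(\<Prod>i<n. p i) = (\<Prod>i<n. \<alpha> ((i + Suc k) mod n) / \<alpha> ((i + k) mod n) * q ((i + k) mod n))"
    by (rule prod.cong) (use rel in auto)
  also have "\<dots> = (\<Prod>i<n. \<alpha> ((i + Suc k) mod n)) / (\<Prod>i<n. \<alpha> ((i + k) mod n)) * (\<Prod>i<n. q ((i + k) mod n))"
    by (simp add: prod.distrib prod_dividef)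
  also have "\<dots> = (\<Prod>i<n. \<alpha> i) / (\<Prod>i<n. \<alpha> i) * (\<Prod>i<n. q i)"
    unfolding prod_rot[OF n, of \<alpha> "Suc k"] prod_rot[OF n, of \<alpha> k] prod_rot[OF n, of q k] ..
  also have "\<dots> = (\<Prod>i<n. q i)"
    using anz by (simp add: prod_zero_iff)
  finally show ?thesis .
qed

definition gam :: "nat \<Rightarrow> (nat \<Rightarrow> 'k) \<Rightarrow> (nat \<Rightarrow> 'k) \<Rightarrow> nat \<Rightarrow> 'k::field" where
  "gam n p q i = (if i < n then (\<Prod>j<i. p j / q j) else 1)"

lemma gamma_from_prod:
  fixes p q :: "nat \<Rightarrow> 'k::field"
  assumes n: "0 < n" and pnz: "\<forall>i<n. p i \<noteq> 0" and qnz: "\<forall>i<n. q i \<noteq> 0"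
    and pr: "(\<Prod>i<n. p i) = (\<Prod>i<n. q i)"
  shows "\<forall>i. gam n p q i \<noteq> 0" "\<forall>i<n. p i = q i * gam n p q (Suc i mod n) / gam n p q i"
proof -
  define g where "g = gam n p q"
  have gd: "\<And>i. g i = (if i < n then (\<Prod>j<i. p j / q j) else 1)" by (simp add: g_def gam_def)
  have gnz: "\<forall>i. g i \<noteq> 0"
    using pnz qnz by (auto simp: gd prod_zero_iff)
  have rel: "\<forall>i<n. p i = q i * g (Suc i mod n) / g i"
  proof (intro allI impI)
    fix i assume i: "i < n"
    have gi: "g i \<noteq> 0" using gnz by blast
    have qi: "q i \<noteq> 0" using qnz i by blast
    show "p i = q i * g (Suc i mod n) / g i"
    proof (cases "Suc i < n")
      case True
      then have "g (Suc i mod n) = g i * (p i / q i)" by (simp add: gd i)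
      then show ?thesis using gi qi by (simp add: field_simps)
    next
      case False
      then have si: "Suc i = n" using i by simp
      have g0: "g (Suc i mod n) = 1" using si n by (simp add: gd)
      have "(\<Prod>j<n. p j / q j) = (\<Prod>j<n. p j) / (\<Prod>j<n. q j)" by (simp add: prod_dividef)
      also have "\<dots> = 1" using pr qnz by (simp add: prod_zero_iff)
      finally have "(\<Prod>j<Suc i. p j / q j) = 1" using si by simp
      then have "g i * (p i / q i) = 1" by (simp add: gd i)
      then show ?thesis using g0 gi qi by (simp add: field_simps)
    qed
  qed
  show "\<forall>i. gam n p q i \<noteq> 0" using gnz unfolding g_def .
  show "\<forall>i<n. p i = q i * gam n p q (Suc i mod n) / gam n p q i" using rel unfolding g_def .
qed

theorem theorem2p10:
  fixes n :: nat and q p :: "nat \<Rightarrow> 'k::field_char_0"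
  assumes alg_closed: "\<forall>f :: 'k poly. degree f > 0 \<longrightarrow> (\<exists>x. poly f x = 0)"
    and "n \<ge> 2"
    and "\<forall>i<n. q i \<noteq> 0" and "\<forall>i<n. p i \<noteq> 0"
  shows "B_iso n q p \<longleftrightarrow>
    (\<exists>\<alpha> :: nat \<Rightarrow> 'k. \<exists>k<n. (\<forall>i<n. \<alpha> i \<noteq> 0) \<and>
       (\<forall>i<n. p i = \<alpha> ((i + k + 1) mod n) / \<alpha> ((i + k) mod n) * q ((i + k) mod n)))"
proof -
  have n2: "2 \<le> n" and qnz: "\<forall>i<n. q i \<noteq> 0" and pnz: "\<forall>i<n. p i \<noteq> 0" using assms by auto
  have n0: "0 < n" using n2 by simp
  let ?g = "gam n p q"
  show ?thesis
  proof
    assume "B_iso n q p"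
    then have "\<exists>\<Phi>. fwd n q p \<Phi>"
      unfolding B_iso_def fwd_def using n2 pnz
      by (elim exE conjE) (rule exI, intro conjI, assumption+)
    then obtain \<Phi> where "fwd n q p \<Phi>" by blast
    then have pr: "(\<Prod>i<n. p i) = (\<Prod>i<n. q i)" by (rule fwd.prod_eq)
    note G = gamma_from_prod[OF n0 pnz qnz pr]
    show "\<exists>\<alpha> :: nat \<Rightarrow> 'k. \<exists>k<n. (\<forall>i<n. \<alpha> i \<noteq> 0) \<and>
       (\<forall>i<n. p i = \<alpha> ((i + k + 1) mod n) / \<alpha> ((i + k) mod n) * q ((i + k) mod n))"
    proof (intro exI[of _ ?g] exI[of _ 0] conjI allI impI)
      show "0 < n" by (rule n0)
      fix i assume i: "i < n"
      show "?g i \<noteq> 0" using G(1) by blast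
      have "p i = q i * ?g (Suc i mod n) / ?g i" using G(2) i by blast
      then show "p i = ?g ((i + 0 + 1) mod n) / ?g ((i + 0) mod n) * q ((i + 0) mod n)"
        using i by (simp add: mult.commute)
    qed
  next
    assume "\<exists>\<alpha> :: nat \<Rightarrow> 'k. \<exists>k<n. (\<forall>i<n. \<alpha> i \<noteq> 0) \<and>
       (\<forall>i<n. p i = \<alpha> ((i + k + 1) mod n) / \<alpha> ((i + k) mod n) * q ((i + k) mod n))"
    then obtain \<alpha> :: "nat \<Rightarrow> 'k" and k where a: "\<forall>i<n. \<alpha> i \<noteq> 0"
      "\<forall>i<n. p i = \<alpha> ((i + k + 1) mod n) / \<alpha> ((i + k) mod n) * q ((i + k) mod n)" by blast
    have pr: "(\<Prod>i<n. p i) = (\<Prod>i<n. q i)" by (rule prod_from_alpha[OF n0 a])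
    note G = gamma_from_prod[OF n0 pnz qnz pr]
    show "B_iso n q p" by (rule backward[OF G])
  qed
qed


end
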